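(* Let $\Gamma$ be a connected signed graph on $N$ vertices containing edges of both signs, with signed Laplacian $\mathcal{L}$. For each $i$ let $D_i=\{z\in\mathbb{C}:|z-\mathcal{L}_{ii}|\le\sum_{j\ne i}|\mathcal{L}_{ij}|\}$ be the $i$-th Gershgorin disc, and let $n$ be the number of indices $i$ for which $0$ lies in the interior of $D_i$. Then $n\ge\tau(\Gamma)+1$.
   Context: A signed graph $\Gamma$ is a finite simple undirected graph with vertex set $\{1,\dots,N\}$ in which every edge $\{i,j\}$ carries a nonzero real weight $\gamma_{ij}$, which may be of either sign ($\gamma_{ij}=0$ for non-edges). The signed Laplacian has $\mathcal{L}_{ij}=\gamma_{ij}$ for $i\ne j$ and $\mathcal{L}_{ii}=-\sum_{k\ne i}\gamma_{ik}$. $\Gamma_+$ (resp. $\Gamma_-$) is the spanning subgraph on all vertices containing exactly the positively (resp. negatively) weighted edges; $c(H)$ is the number of connected components of $H$; the flexibility is $\tau(\Gamma)=N-c(\Gamma_-)-c(\Gamma_+)+1$. *)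

theory Defs
  imports "HOL-Analysis.Analysis"
begin

definition signed_graph :: "nat \<Rightarrow> (nat \<Rightarrow> nat \<Rightarrow> real) \<Rightarrow> bool" where
  "signed_graph N \<gamma> \<longleftrightarrow>
     (\<forall>i j. \<gamma> i j = \<gamma> j i) \<and> (\<forall>i. \<gamma> i i = 0) \<and>
     (\<forall>i j. \<gamma> i j \<noteq> 0 \<longrightarrow> i \<in> {1..N} \<and> j \<in> {1..N})"

definition signed_laplacian :: "nat \<Rightarrow> (nat \<Rightarrow> nat \<Rightarrow> real) \<Rightarrow> nat \<Rightarrow> nat \<Rightarrow> real" where
  "signed_laplacian N \<gamma> i j =
     (if i = j then - (\<Sum>k\<in>{1..N} - {i}. \<gamma> i k) else \<gamma> i j)"

definition num_components :: "nat \<Rightarrow> (nat \<Rightarrow> nat \<Rightarrow> bool) \<Rightarrow> nat" where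
  "num_components N E =
     card ({1..N} // ({(i, j). i \<in> {1..N} \<and> j \<in> {1..N} \<and> E i j}\<^sup>*))"

definition pos_edge :: "(nat \<Rightarrow> nat \<Rightarrow> real) \<Rightarrow> nat \<Rightarrow> nat \<Rightarrow> bool" where
  "pos_edge \<gamma> i j \<longleftrightarrow> \<gamma> i j > 0"

definition neg_edge :: "(nat \<Rightarrow> nat \<Rightarrow> real) \<Rightarrow> nat \<Rightarrow> nat \<Rightarrow> bool" where
  "neg_edge \<gamma> i j \<longleftrightarrow> \<gamma> i j < 0"

definition any_edge :: "(nat \<Rightarrow> nat \<Rightarrow> real) \<Rightarrow> nat \<Rightarrow> nat \<Rightarrow> bool" where
  "any_edge \<gamma> i j \<longleftrightarrow> \<gamma> i j \<noteq> 0"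

text \<open>Flexibility tau = N - c(Gamma_-) - c(Gamma_+) + 1 (as an integer).\<close>
definition flexibility :: "nat \<Rightarrow> (nat \<Rightarrow> nat \<Rightarrow> real) \<Rightarrow> int" where
  "flexibility N \<gamma> = int N - int (num_components N (neg_edge \<gamma>))
                       - int (num_components N (pos_edge \<gamma>)) + 1"

definition gershgorin_disc :: "nat \<Rightarrow> (nat \<Rightarrow> nat \<Rightarrow> real) \<Rightarrow> nat \<Rightarrow> complex set" where
  "gershgorin_disc N L i =
     cball (complex_of_real (L i i)) (\<Sum>j\<in>{1..N} - {i}. \<bar>L i j\<bar>)"

end

theory Submission
  imports Defs
begin

lemma abs_sum_strict:
  fixes f :: "nat \<Rightarrow> real"
  assumes "finite T" "j \<in> T" "k \<in> T" "f j < 0" "f k > 0"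
  shows "\<bar>sum f T\<bar> < (\<Sum>x\<in>T. \<bar>f x\<bar>)"
proof -
  have a: "sum f T < (\<Sum>x\<in>T. \<bar>f x\<bar>)"
    by (rule sum_strict_mono_ex1) (use assms in \<open>auto intro!: bexI[of _ j]\<close>)
  have b: "(\<Sum>x\<in>T. - f x) < (\<Sum>x\<in>T. \<bar>f x\<bar>)"
    by (rule sum_strict_mono_ex1) (use assms in \<open>auto intro!: bexI[of _ k]\<close>)
  have "(\<Sum>x\<in>T. - f x) = - sum f T" by (simp add: sum_negf)
  with a b show ?thesis by linarith
qed

lemma comp_bound:
  fixes S :: "nat set" and R :: "(nat \<times> nat) set"
  assumes fin: "finite S" and v: "v \<in> S" "(v, w) \<in> R"
  shows "card {x\<in>S. \<forall>y. (x,y) \<notin> R} + 1 \<le> card (S // (R\<^sup>*))"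
proof -
  define A where "A = {x\<in>S. \<forall>y. (x,y) \<notin> R}"
  define f where "f = (\<lambda>x. R\<^sup>* `` {x})"
  have sing: "f x = {x}" if "x \<in> A" for x
  proof -
    have "y = x" if "(x,y) \<in> R\<^sup>*" for y
      using that \<open>x \<in> A\<close> by (cases rule: converse_rtranclE) (auto simp: A_def)
    then show ?thesis by (auto simp: f_def)
  qed
  have vA: "v \<notin> A" using v by (auto simp: A_def)
  have "inj_on f (insert v A)"
  proof (rule inj_onI)
    fix x y assume x: "x \<in> insert v A" and y: "y \<in> insert v A" and e: "f x = f y"
    have vf: "z \<in> f z" for z by (simp add: f_def)
    show "x = y"
      using x y e sing vA vf by (metis insertE singletonD)
  qed
  moreover have "f ` insert v A \<subseteq> S // (R\<^sup>*)"
    using v by (auto simp: f_def A_def quotient_def)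
  moreover have "finite (S // (R\<^sup>*))"
  proof -
    have "S // (R\<^sup>*) = (\<lambda>x. R\<^sup>* `` {x}) ` S" by (auto simp: quotient_def)
    then show ?thesis using fin by simp
  qed
  ultimately have "card (insert v A) \<le> card (S // (R\<^sup>*))"
    by (metis card_image card_mono)
  moreover have "finite A" using fin by (simp add: A_def)
  ultimately show ?thesis using vA by (simp add: A_def)
qed

theorem mainTheorem12:
  fixes N :: nat and \<gamma> :: "nat \<Rightarrow> nat \<Rightarrow> real"
  assumes "signed_graph N \<gamma>"
    and "num_components N (any_edge \<gamma>) = 1"
    and "\<exists>i j. \<gamma> i j > 0"
    and "\<exists>i j. \<gamma> i j < 0"
  shows "int (card {i \<in> {1..N}. 0 \<in> interior (gershgorin_disc N (signed_laplacian N \<gamma>) i)})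
           \<ge> flexibility N \<gamma> + 1"
proof -
  note sg = assms(1)[unfolded signed_graph_def]
  have inV: "i \<in> {1..N} \<and> j \<in> {1..N}" if "\<gamma> i j \<noteq> 0" for i j
    using sg that by blast
  define M where "M = {i \<in> {1..N}. 0 \<in> interior (gershgorin_disc N (signed_laplacian N \<gamma>) i)}"
  define Rn where "Rn = {(i, j). i \<in> {1..N} \<and> j \<in> {1..N} \<and> neg_edge \<gamma> i j}"
  define Rp where "Rp = {(i, j). i \<in> {1..N} \<and> j \<in> {1..N} \<and> pos_edge \<gamma> i j}"
  define An where "An = {x\<in>{1..N}. \<forall>y. (x,y) \<notin> Rn}"
  define Ap where "Ap = {x\<in>{1..N}. \<forall>y. (x,y) \<notin> Rp}"
  obtain a b where ab: "\<gamma> a b < 0" using assms(4) by auto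
  have abR: "a \<in> {1..N}" "(a,b) \<in> Rn" using ab inV[of a b] by (auto simp: Rn_def neg_edge_def)
  obtain c d where cd: "\<gamma> c d > 0" using assms(3) by auto
  have cdR: "c \<in> {1..N}" "(c,d) \<in> Rp" using cd inV[of c d] by (auto simp: Rp_def pos_edge_def)
  have cn: "card An + 1 \<le> num_components N (neg_edge \<gamma>)"
    unfolding num_components_def An_def
    using comp_bound[where S="{1..N}" and R=Rn and v=a and w=b] abR by (simp add: Rn_def)
  have cp: "card Ap + 1 \<le> num_components N (pos_edge \<gamma>)"
    unfolding num_components_def Ap_def
    using comp_bound[where S="{1..N}" and R=Rp and v=c and w=d] cdR by (simp add: Rp_def)
  have cover: "{1..N} \<subseteq> M \<union> An \<union> Ap"
  proof
    fix i assume i: "i \<in> {1..N}"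
    show "i \<in> M \<union> An \<union> Ap"
    proof (rule ccontr)
      assume "i \<notin> M \<union> An \<union> Ap"
      then obtain j k where j: "(i,j) \<in> Rn" and k: "(i,k) \<in> Rp" "i \<notin> M"
        using i by (auto simp: An_def Ap_def)
      define T where "T = {1..N} - {i}"
      have jT: "j \<in> T" "\<gamma> i j < 0" using j sg by (auto simp: T_def Rn_def neg_edge_def)
      have kT: "k \<in> T" "\<gamma> i k > 0" using k sg by (auto simp: T_def Rp_def pos_edge_def)
      have lt: "\<bar>sum (\<gamma> i) T\<bar> < (\<Sum>x\<in>T. \<bar>\<gamma> i x\<bar>)"
        using abs_sum_strict[of T j k "\<gamma> i"] jT kT by (simp add: T_def)
      have rad: "(\<Sum>x\<in>T. \<bar>signed_laplacian N \<gamma> i x\<bar>) = (\<Sum>x\<in>T. \<bar>\<gamma> i x\<bar>)"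
        by (rule sum.cong) (auto simp: T_def signed_laplacian_def)
      have "0 \<in> interior (gershgorin_disc N (signed_laplacian N \<gamma>) i)"
      proof -
        have L: "signed_laplacian N \<gamma> i i = - sum (\<gamma> i) T"
          by (simp add: signed_laplacian_def T_def)
        have d: "gershgorin_disc N (signed_laplacian N \<gamma>) i
              = cball (complex_of_real (- sum (\<gamma> i) T)) (\<Sum>x\<in>T. \<bar>\<gamma> i x\<bar>)"
          unfolding gershgorin_disc_def L rad[unfolded T_def] T_def ..
        have "dist (complex_of_real (- sum (\<gamma> i) T)) 0 = \<bar>sum (\<gamma> i) T\<bar>"
          by (simp only: dist_norm diff_zero norm_minus_cancel norm_of_real)
        then show ?thesis unfolding d interior_cball using lt by (simp add: mem_ball)
      qed
      then show False using k i by (simp add: M_def)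
    qed
  qed
  have "N \<le> card (M \<union> An \<union> Ap)"
    using card_mono[OF _ cover] by (simp add: M_def An_def Ap_def)
  also have "\<dots> \<le> card M + card An + card Ap"
    by (metis card_Un_le add_le_mono order_trans order_refl)
  finally have "N \<le> card M + card An + card Ap" .
  then show ?thesis using cn cp unfolding flexibility_def M_def[symmetric] by linarith
qed

end
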